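(* Let $m$ be a positive integer, and let $A=\{a_s(n_s)\}_{s=1}^k$ with positive integers $n_s$ and integers $0\leqslant a_s<n_s$. Let $p$ be any prime with $p>|S(n_1,\ldots,n_k)|$. Then $A$ is an exact $m$-cover of $\mathbb Z$ (i.e., $|\{1\leqslant s\leqslant k: x\equiv a_s\pmod{n_s}\}|=m$ for every $x\in\mathbb Z$) if and only if $$\sum_{s=1}^k\frac{e^{2\pi i a_s/p}}{1-e^{2\pi i n_s/p}}=\frac{m}{1-e^{2\pi i/p}}.$$
   Context: For a positive integer $n$ and $a\in\{0,\ldots,n-1\}$, $a(n)$ denotes the residue class $\{x\in\mathbb Z: x\equiv a \pmod n\}$. For positive integers $n_1,\ldots,n_k$, $S(n_1,\ldots,n_k)=\{r/n_s: r=0,\ldots,n_s-1;\ s=1,\ldots,k\}$, a set of rational numbers, and $|S(\cdot)|$ denotes its cardinality. *)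

theory Defs
  imports Complex_Main "HOL-Computational_Algebra.Primes"
begin

definition res_class :: "int \<Rightarrow> int \<Rightarrow> int set" where
  "res_class a n = {x. x mod n = a mod n}"

definition S_set :: "nat \<Rightarrow> (nat \<Rightarrow> int) \<Rightarrow> rat set" where
  "S_set k n = {of_int r / of_int (n s) | r s. s \<in> {1..k} \<and> 0 \<le> r \<and> r < n s}"

definition exact_m_cover :: "nat \<Rightarrow> nat \<Rightarrow> (nat \<Rightarrow> int) \<Rightarrow> (nat \<Rightarrow> int) \<Rightarrow> bool" where
  "exact_m_cover m k a n \<longleftrightarrow>
     (\<forall>x::int. card {s \<in> {1..k}. x \<in> res_class (a s) (n s)} = m)"

end

theory Submission
  imports Defs "Berlekamp_Zassenhaus.Factor_Bound"
begin


lemma eis_core: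
  fixes G H :: "int poly" and q :: int
  assumes q: "prime q" and g0: "q dvd coeff G 0" and h0: "\<not> q dvd coeff H 0"
    and lg: "\<not> q dvd lead_coeff G" and all: "\<forall>j\<le>degree G. q dvd coeff (G*H) j"
  shows False
proof -
  define r where "r = (LEAST i. \<not> q dvd coeff G i)"
  have ex: "\<not> q dvd coeff G (degree G)" using lg by simp
  have r1: "\<not> q dvd coeff G r" unfolding r_def by (rule LeastI[of _ "degree G"]) (rule ex)
  have r2: "r \<le> degree G" unfolding r_def by (rule Least_le) (rule ex)
  have r3: "\<And>i. i < r \<Longrightarrow> q dvd coeff G i" unfolding r_def using not_less_Least by blast
  have "r \<noteq> 0" using r1 g0 by (metis)
  have "coeff (G*H) r = (\<Sum>i\<le>r. coeff G i * coeff H (r-i))" by (simp add: coeff_mult)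
  also have "\<dots> = (\<Sum>i<r. coeff G i * coeff H (r-i)) + coeff G r * coeff H 0"
    by (simp add: lessThan_Suc_atMost[symmetric])
  finally have eq: "coeff (G*H) r = (\<Sum>i<r. coeff G i * coeff H (r-i)) + coeff G r * coeff H 0" .
  have d1: "q dvd (\<Sum>i<r. coeff G i * coeff H (r-i))"
    by (rule dvd_sum) (simp add: r3)
  have d2: "q dvd coeff (G*H) r" using all r2 by auto
  have "q dvd coeff G r * coeff H 0" using d1 d2 eq by (metis dvd_add_right_iff)
  then show False using q r1 h0 by (simp add: prime_dvd_mult_iff)
qed

definition cyc :: "nat \<Rightarrow> 'a::comm_ring_1 poly" where
  "cyc p = (\<Sum>i<p. monom 1 i)"

lemma poly_cyc: "poly (cyc p) z = (\<Sum>i<p. z^i)"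
  by (simp add: cyc_def poly_sum poly_monom)

lemma cyc_mult: "cyc p * [:-1,1:] = monom 1 p - (1::'a::comm_ring_1 poly)"
proof (induction p)
  case 0 then show ?case by (simp add: cyc_def)
next
  case (Suc p)
  have "cyc (Suc p) * [:-1,1:] = cyc p * [:-1,1:] + monom 1 p * [:-1,1:]"
    by (simp add: cyc_def algebra_simps)
  also have "monom (1::'a) p * [:-1,1:] = monom 1 (Suc p) - monom 1 p"
    by (simp add: monom_altdef algebra_simps)
  finally show ?case using Suc by simp
qed

lemma map_cyc: "map_poly of_int (cyc p) = (cyc p :: 'a::{comm_ring_1,ring_char_0} poly)"
  by (simp add: cyc_def hom_distribs)


lemma pcompose_xpow: "pcompose (pCons 0 1^n) q = q^n"
  by (induction n) (simp_all add: pcompose_mult pcompose_pCons)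

lemma shift_coeff:
  "coeff (pcompose (cyc p) [:1,1:]) j = (of_nat (p choose Suc j) :: int)"
proof -
  define F where "F = pcompose (cyc p) [:1::int,1:]"
  have "pcompose (cyc p * [:-1,1:]) [:1::int,1:] = F * pcompose [:-1,1:] [:1,1:]"
    unfolding F_def by (rule pcompose_mult)
  also have "pcompose [:-1,1:] [:1::int,1:] = [:0,1:]" by (simp add: pcompose_pCons)
  finally have "pcompose (cyc p * [:-1,1:]) [:1::int,1:] = F * [:0,1:]" .
  hence "pcompose (monom 1 p - 1) [:1::int,1:] = F * [:0,1:]" unfolding cyc_mult .
  moreover have "pcompose (monom 1 p - 1) [:1::int,1:] = [:1,1:]^p - 1"
    by (simp add: pcompose_diff monom_altdef pcompose_xpow pcompose_pCons)
  ultimately have e: "F * [:0,1:] = [:1,1:]^p - 1" by simp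
  have "coeff (F * [:0,1:]) (Suc j) = coeff F j"
    by (simp add: mult.commute[of F] )
  also have "coeff (F * [:0,1:]) (Suc j) = of_nat (p choose Suc j)"
  proof (cases "Suc j \<le> p")
    case True then show ?thesis unfolding e using coeff_linear_poly_power[of "Suc j" p "1::int" 1] by simp
  next
    case False
    then show ?thesis using degree_linear_power[of "1::int" p] False unfolding e
      by (simp add: coeff_eq_0 binomial_eq_0)
  qed
  finally show ?thesis unfolding F_def by simp
qed

lemma eis_half:
  fixes G H :: "int poly"
  assumes p: "prime p" and F: "pcompose (cyc p) [:1,1:] = G * H"
    and dH: "degree H > 0" and g0: "int p dvd coeff G 0"
  shows False
proof -
  define F where "F = pcompose (cyc p) [:1::int,1:]"
  have p2: "p \<ge> 2" using p prime_ge_2_nat by blast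
  have cF: "\<And>j. coeff F j = int (p choose Suc j)" unfolding F_def by (rule shift_coeff)
  have "coeff F (p - 1) = 1" using p2 cF by simp
  hence degF1: "degree F \<ge> p - 1" by (metis le_degree one_neq_zero)
  have "\<And>j. j > p - 1 \<Longrightarrow> coeff F j = 0" using cF by simp
  hence degF2: "degree F \<le> p - 1" by (intro degree_le) simp
  have degF: "degree F = p - 1" using degF1 degF2 by simp
  have FGH: "F = G * H" using F F_def by simp
  have G0: "G \<noteq> 0" and H0: "H \<noteq> 0" using FGH degF p2 by auto
  have dsum: "degree G + degree H = p - 1" using degree_mult_eq[OF G0 H0] FGH degF by simp
  have "lead_coeff G * lead_coeff H = 1"
    using lead_coeff_mult[of G H] FGH degF cF p2 by simp
  hence lg: "\<not> int p dvd lead_coeff G" using p2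
    by (metis dvd_mult2 int_dvd_int_iff nat_dvd_1_iff_1 of_nat_1 numeral_le_one_iff semiring_norm(69) dvd_triv_left)
  have c0: "coeff G 0 * coeff H 0 = int p" using coeff_mult_0[of G H] FGH cF by simp
  have h0: "\<not> int p dvd coeff H 0"
  proof
    assume "int p dvd coeff H 0"
    with g0 have "int p * int p dvd int p" using c0 by (metis mult_dvd_mono)
    hence "p * p dvd p" by (metis int_dvd_int_iff of_nat_mult)
    hence "p * p \<le> p" using p2 by (intro dvd_imp_le) auto
    moreover have "2 * p \<le> p * p" using p2 by (intro mult_right_mono) simp_all
    ultimately show False using p2 by linarith
  qed
  have all: "\<forall>j\<le>degree G. int p dvd coeff (G*H) j"
  proof (intro allI impI)
    fix j assume "j \<le> degree G"
    hence "Suc j < p" using dsum dH by linarith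
    hence "p dvd (p choose Suc j)" using p p2 by (intro dvd_choose_prime) auto
    thus "int p dvd coeff (G*H) j" using cF FGH by (metis int_dvd_int_iff)
  qed
  show False using eis_core[of "int p" G H] p g0 h0 lg all by simp
qed

lemma cyc_irred_int:
  fixes g h :: "int poly"
  assumes p: "prime p" and e: "cyc p = g * h"
  shows "degree g = 0 \<or> degree h = 0"
proof (rule ccontr)
  assume "\<not> (degree g = 0 \<or> degree h = 0)"
  hence dg: "degree g > 0" and dh: "degree h > 0" by auto
  define G where "G = pcompose g [:1,1:]"
  define H where "H = pcompose h [:1,1:]"
  have dG: "degree G > 0" using dg by (simp add: G_def degree_pcompose)
  have dH: "degree H > 0" using dh by (simp add: H_def degree_pcompose)
  have FGH: "pcompose (cyc p) [:1,1:] = G * H" unfolding G_def H_def e by (rule pcompose_mult)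
  have "coeff G 0 * coeff H 0 = int p" using coeff_mult_0[of G H] FGH[symmetric] shift_coeff[of p 0] by simp
  hence "int p dvd coeff G 0 * coeff H 0" by simp
  hence "int p dvd coeff G 0 \<or> int p dvd coeff H 0" using p by (simp add: prime_dvd_mult_iff)
  thus False
  proof
    assume "int p dvd coeff G 0" thus False using eis_half[OF p FGH dH] by simp
  next
    assume "int p dvd coeff H 0" thus False using eis_half[OF p _ dG, of H] FGH by (simp add: mult.commute)
  qed
qed

lemma cyc_irred_rat:
  fixes g h :: "rat poly"
  assumes p: "prime p" and e: "cyc p = g * h"
  shows "degree g = 0 \<or> degree h = 0"
proof -
  have "map_poly rat_of_int (cyc p) = g * h" using e map_cyc by metis
  from rat_to_int_factor[OF this] obtain g' h' where "(cyc p :: int poly) = g' * h'" "degree g' = degree g" "degree h' = degree h"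
    by blast
  with cyc_irred_int[OF p] show ?thesis by metis
qed

lemma cyc_root:
  assumes "w^p = (1::complex)" "w \<noteq> 1"
  shows "poly (cyc p) w = 0"
  using assms by (simp add: poly_cyc sum_gp_strict)

interpretation rc: map_poly_comm_ring_hom "of_rat :: rat \<Rightarrow> complex" by unfold_locales

lemma map_rat_int: "map_poly (of_rat :: rat \<Rightarrow> complex) (map_poly of_int R) = map_poly of_int R"
  by (subst map_poly_map_poly) (auto simp: o_def intro!: map_poly_cong)

lemma map_rat_cyc: "map_poly (of_rat :: rat \<Rightarrow> complex) (cyc p) = cyc p"
  by (metis map_cyc map_rat_int)

lemma conj_roots:
  fixes R :: "int poly" and z w :: complex
  assumes p: "prime p" and z: "z^p = 1" "z \<noteq> 1" and R: "poly (map_poly of_int R) z = 0"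
    and w: "w^p = 1" "w \<noteq> 1"
  shows "poly (map_poly of_int R) w = 0"
proof -
  define Rq where "Rq = (map_poly of_int R :: rat poly)"
  define C where "C = (cyc p :: rat poly)"
  define g where "g = gcd Rq C"
  define M where "M = (map_poly (of_rat :: rat \<Rightarrow> complex))"
  have MR: "M Rq = map_poly of_int R" unfolding M_def Rq_def by (rule map_rat_int)
  have MC: "M C = cyc p" unfolding M_def C_def by (rule map_rat_cyc)
  have bz: "fst (bezout_coefficients Rq C) * Rq + snd (bezout_coefficients Rq C) * C = g"
    unfolding g_def by (rule bezout_coefficients_fst_snd)
  have "M g = M (fst (bezout_coefficients Rq C)) * M Rq + M (snd (bezout_coefficients Rq C)) * M C"
    unfolding bz[symmetric] M_def by (simp add: rc.hom_mult rc.hom_add)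
  hence gz: "poly (M g) z = 0" using MR MC R cyc_root[OF z] by simp
  have p2: "p \<ge> 2" using p prime_ge_2_nat by blast
  have "poly C 0 = 1" unfolding C_def poly_cyc using p2 by (simp add: sum_gp_strict)
  hence C0: "C \<noteq> 0" by auto
  have g0: "g \<noteq> 0" using C0 unfolding g_def by simp
  have dg: "degree g \<noteq> 0"
  proof
    assume "degree g = 0"
    then obtain c where "g = [:c:]" by (metis degree_eq_zeroE)
    with g0 gz show False unfolding M_def by simp
  qed
  have "g dvd C" unfolding g_def by simp
  then obtain h where Cgh: "C = g * h" by (elim dvdE)
  have "degree h = 0" using cyc_irred_rat[OF p Cgh[unfolded C_def]] dg by simp
  then obtain c where hc: "h = [:c:]" by (metis degree_eq_zeroE)
  have c0: "c \<noteq> 0" using C0 Cgh hc by auto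
  have "g = smult (inverse c) C" using Cgh hc c0 by simp
  hence "C dvd g" by (simp add: dvd_smult)
  also have "g dvd Rq" unfolding g_def by simp
  finally obtain t where "Rq = C * t" by (elim dvdE)
  hence "M Rq = M C * M t" unfolding M_def by (simp add: rc.hom_mult)
  hence "map_poly of_int R = cyc p * M t" using MR MC by simp
  thus ?thesis using cyc_root[OF w] by simp
qed



lemma zeta_pow: "cis (2*pi/real p) ^ j = cis (2*pi*real j/real p)"
  by (simp add: DeMoivre mult_ac)

lemma zeta_pow_eq_1:
  assumes "p > 0"
  shows "cis (2*pi/real p) ^ j = 1 \<longleftrightarrow> p dvd j"
proof -
  define z where "z = cis (2*pi/real p)"
  define f where "f = (\<lambda>k::nat. cis (2 * pi * real k / real p))"
  have inj: "inj_on f {..<p}" using bij_betw_roots_unity[OF assms] unfolding f_def bij_betw_def by blast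
  have zp: "z ^ p = 1" unfolding z_def zeta_pow using assms
    by (simp add: complex_eq_iff)
  have "z ^ j = z ^ (p * (j div p) + j mod p)" by (simp only: mult_div_mod_eq)
  also have "\<dots> = z ^ (j mod p)" by (simp only: power_add power_mult zp power_one mult_1)
  finally have "z ^ j = f (j mod p)" unfolding f_def z_def zeta_pow .
  moreover have "f 0 = 1" unfolding f_def by simp
  moreover have "j mod p \<in> {..<p}" "0 \<in> {..<p}" using assms by auto
  ultimately have "z ^ j = 1 \<longleftrightarrow> j mod p = 0" using inj unfolding inj_on_def by metis
  thus ?thesis unfolding z_def by auto
qed

lemma geom_class:
  fixes w :: complex
  assumes n: "n > 0" and a: "a < n" and d: "n dvd N" and w: "w^n \<noteq> 1"
  shows "(\<Sum>x<N. if x mod n = a then w^x else 0) = w^a * (1 - w^N) / (1 - w^n)"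
proof -
  have "(\<Sum>x<N. if x mod n = a then w^x else 0) = (\<Sum>x\<in>{x\<in>{..<N}. x mod n = a}. w^x)"
    using sum.inter_filter[of "{..<N}" "\<lambda>x. w^x" "\<lambda>x. x mod n = a"] by simp
  also have "{x\<in>{..<N}. x mod n = a} = (\<lambda>t. a + n*t) ` {..<N div n}"
  proof (intro equalityI subsetI)
    fix x assume x: "x \<in> {x\<in>{..<N}. x mod n = a}"
    have xm: "x mod n = a" and xN: "x < N" using x by auto
    have "x = n * (x div n) + x mod n" by simp
    hence "x = a + n * (x div n)" using xm by simp
    moreover have "x div n < N div n"
    proof -
      have "x < (N div n) * n" using xN d by simp
      thus ?thesis using n by (simp add: div_less_iff_less_mult)
    qed
    ultimately show "x \<in> (\<lambda>t. a + n*t) ` {..<N div n}" by blast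
  next
    fix x assume "x \<in> (\<lambda>t. a + n*t) ` {..<N div n}"
    then obtain t where t: "t < N div n" "x = a + n*t" by auto
    have "a + n*t < n + n*t" using a by simp
    also have "\<dots> = n * Suc t" by simp
    also have "\<dots> \<le> n * (N div n)" using t by (intro mult_le_mono2) simp
    also have "\<dots> = N" using d by simp
    finally have "x < N" using t by simp
    moreover have "x mod n = a" using t a by simp
    ultimately show "x \<in> {x\<in>{..<N}. x mod n = a}" by simp
  qed
  also have "(\<Sum>x\<in>(\<lambda>t. a + n*t) ` {..<N div n}. w^x) = (\<Sum>t<N div n. w^(a + n*t))"
    by (subst sum.reindex) (auto simp: inj_on_def n)
  also have "\<dots> = w^a * (\<Sum>t<N div n. (w^n)^t)"
    by (simp add: power_add power_mult sum_distrib_left)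
  also have "(\<Sum>t<N div n. (w^n)^t) = (1 - (w^n)^(N div n)) / (1 - w^n)"
    using w by (simp add: sum_gp_strict)
  also have "(w^n)^(N div n) = w^N" using d by (simp add: power_mult[symmetric])
  finally show ?thesis by simp
qed

lemma card_as_sum:
  "(of_nat (card {s\<in>K. P s}) :: complex) = (\<Sum>s\<in>K. if P s then 1 else 0)" if "finite K"
proof -
  have "(of_nat (card {s\<in>K. P s}) :: complex) = (\<Sum>s\<in>{s\<in>K. P s}. 1)" by simp
  also have "\<dots> = (\<Sum>s\<in>K. if P s then 1 else 0)" by (rule sum.inter_filter[OF that])
  finally show ?thesis .
qed

lemma eval_lemma:
  fixes w :: complex and A Nn :: "nat \<Rightarrow> nat"
  assumes K: "finite K" and h: "\<forall>s\<in>K. 0 < Nn s \<and> A s < Nn s \<and> Nn s dvd N \<and> w^(Nn s) \<noteq> 1"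
    and w1: "w \<noteq> 1"
  shows "(\<Sum>x<N. (of_nat (card {s\<in>K. x mod Nn s = A s}) - of_nat m) * w^x)
     = (1 - w^N) * ((\<Sum>s\<in>K. w^(A s) / (1 - w^(Nn s))) - of_nat m / (1 - w))"
proof -
  have "(\<Sum>x<N. of_nat (card {s\<in>K. x mod Nn s = A s}) * w^x)
      = (\<Sum>x<N. \<Sum>s\<in>K. if x mod Nn s = A s then w^x else 0)"
  proof (rule sum.cong[OF refl])
    fix x
    show "of_nat (card {s\<in>K. x mod Nn s = A s}) * w^x = (\<Sum>s\<in>K. if x mod Nn s = A s then w^x else 0)"
      unfolding card_as_sum[OF K] sum_distrib_right by (rule sum.cong) auto
  qed
  also have "\<dots> = (\<Sum>s\<in>K. \<Sum>x<N. if x mod Nn s = A s then w^x else 0)" by (rule sum.swap)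
  also have "\<dots> = (\<Sum>s\<in>K. w^(A s) * (1 - w^N) / (1 - w^(Nn s)))"
    using h by (intro sum.cong refl geom_class) auto
  finally have e1: "(\<Sum>x<N. of_nat (card {s\<in>K. x mod Nn s = A s}) * w^x) = (\<Sum>s\<in>K. w^(A s) * (1 - w^N) / (1 - w^(Nn s)))" .
  have e2: "(\<Sum>x<N. of_nat m * w^x) = of_nat m * (1 - w^N) / (1 - w)"
  proof -
    have "(\<Sum>x<N. of_nat m * w^x) = of_nat m * (\<Sum>x<N. w^x)" by (rule sum_distrib_left[symmetric])
    also have "(\<Sum>x<N. w^x) = (1 - w^N) / (1 - w)" using w1 by (simp add: sum_gp_strict)
    finally show ?thesis by simp
  qed
  have "(\<Sum>x<N. (of_nat (card {s\<in>K. x mod Nn s = A s}) - of_nat m) * w^x)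
      = (\<Sum>x<N. of_nat (card {s\<in>K. x mod Nn s = A s}) * w^x) - (\<Sum>x<N. of_nat m * w^x)"
    by (simp add: algebra_simps sum_subtractf)
  also have "\<dots> = (1 - w^N) * ((\<Sum>s\<in>K. w^(A s) / (1 - w^(Nn s))) - of_nat m / (1 - w))"
    unfolding e1 e2 by (simp add: sum_distrib_left right_diff_distrib mult.commute mult.left_commute)
  finally show ?thesis .
qed



lemma poly_as_sum:
  fixes p :: "'a::comm_semiring_1 poly"
  assumes "degree p < N"
  shows "poly p w = (\<Sum>i<N. coeff p i * w^i)"
proof -
  have "poly p w = (\<Sum>i\<le>degree p. coeff p i * w^i)" by (rule poly_altdef)
  also have "\<dots> = (\<Sum>i<N. coeff p i * w^i)"
    using assms by (intro sum.mono_neutral_left) (auto simp: coeff_eq_0)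
  finally show ?thesis .
qed

lemma S_set_eq: "S_set k n = (\<Union>s\<in>{1..k}. (\<lambda>r. of_int r / of_int (n s)) ` {0..<n s})"
  unfolding S_set_def by (auto simp del: atLeastAtMost_iff) (use atLeastAtMost_iff in blast)+

lemma S_fin: "finite (S_set k n)"
  unfolding S_set_eq by auto

theorem main_k_pos:
  fixes m k :: nat and a n :: "nat \<Rightarrow> int" and p :: nat
  assumes "m > 0" and k1: "k \<ge> 1"
    and an: "\<forall>s\<in>{1..k}. n s > 0 \<and> 0 \<le> a s \<and> a s < n s"
    and p: "prime p"
    and pS: "p > card (S_set k n)"
  shows "exact_m_cover m k a n \<longleftrightarrow>
    (\<Sum>s=1..k. cis (2 * pi * of_int (a s) / real p) / (1 - cis (2 * pi * of_int (n s) / real p)))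
      = of_nat m / (1 - cis (2 * pi / real p))"
proof -
  define z where "z = cis (2*pi/real p)"
  have p2: "p \<ge> 2" using p prime_ge_2_nat by blast
  have zpow1: "\<And>j. z ^ j = 1 \<longleftrightarrow> p dvd j" unfolding z_def using p2 by (intro zeta_pow_eq_1) simp
  define A where "A = (\<lambda>s. nat (a s))"
  define Nn where "Nn = (\<lambda>s. nat (n s))"
  define K where "K = {1..k}"
  have K: "finite K" unfolding K_def by simp
  have anK: "\<And>s. s \<in> K \<Longrightarrow> 0 < n s \<and> 0 \<le> a s \<and> a s < n s" using an unfolding K_def by blast
  have nlt: "Nn s < p" if s: "s \<in> K" for s
  proof -
    have inj: "inj_on (\<lambda>r. (of_int r :: rat) / of_int (n s)) {0..<n s}"
      using anK[OF s] by (auto simp: inj_on_def)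
    have "(\<lambda>r. (of_int r :: rat) / of_int (n s)) ` {0..<n s} \<subseteq> S_set k n"
      unfolding S_set_eq using s unfolding K_def by blast
    hence "card ((\<lambda>r. (of_int r :: rat) / of_int (n s)) ` {0..<n s}) \<le> card (S_set k n)"
      by (intro card_mono S_fin)
    hence "card {0..<n s} \<le> card (S_set k n)" using card_image[OF inj] by simp
    thus ?thesis using pS unfolding Nn_def by simp
  qed
  have Nnpos: "\<And>s. s \<in> K \<Longrightarrow> Nn s > 0" using anK unfolding Nn_def by auto
  have Alt: "\<And>s. s \<in> K \<Longrightarrow> A s < Nn s" using anK unfolding Nn_def A_def by auto
  define N where "N = (\<Prod>s\<in>K. Nn s)"
  have Npos: "N > 0" unfolding N_def using Nnpos K by (simp add: prod_pos)
  have Ndvd: "\<And>s. s \<in> K \<Longrightarrow> Nn s dvd N" unfolding N_def using K by (intro dvd_prodI)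
  have pN: "\<not> p dvd N"
  proof
    assume "p dvd N"
    then obtain s where "s \<in> K" "p dvd Nn s" unfolding N_def using p K by (auto simp: prime_dvd_prod_iff)
    thus False using nlt[of s] Nnpos[of s] by (meson dvd_imp_le not_le)
  qed
  have zNn: "\<And>s. s \<in> K \<Longrightarrow> z ^ Nn s \<noteq> 1" using zpow1 nlt Nnpos by (meson dvd_imp_le not_le)
  have z1: "z \<noteq> 1" using zpow1[of 1] p2 by simp
  have zN: "z ^ N \<noteq> 1" using zpow1 pN by simp
  define F where "F = (\<lambda>w::complex. (\<Sum>s\<in>K. w^(A s) / (1 - w^(Nn s))) - of_nat m / (1 - w))"
  have rhs: "((\<Sum>s=1..k. cis (2 * pi * of_int (a s) / real p) / (1 - cis (2 * pi * of_int (n s) / real p)))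
      = of_nat m / (1 - cis (2 * pi / real p))) \<longleftrightarrow> F z = 0"
  proof -
    have "(\<Sum>s=1..k. cis (2 * pi * of_int (a s) / real p) / (1 - cis (2 * pi * of_int (n s) / real p)))
       = (\<Sum>s\<in>K. z^(A s) / (1 - z^(Nn s)))"
    proof (rule sum.cong)
      fix s assume "s \<in> K"
      hence s: "s \<in> {1..k}" unfolding K_def .
      have "0 < n s" "0 \<le> a s" using anK[of s] s unfolding K_def by auto
      hence "of_int (a s) = real (A s)" "of_int (n s) = real (Nn s)" unfolding A_def Nn_def by simp_all
      thus "cis (2 * pi * of_int (a s) / real p) / (1 - cis (2 * pi * of_int (n s) / real p)) = z^(A s) / (1 - z^(Nn s))"
        unfolding z_def zeta_pow by simp
    qed (simp add: K_def)
    thus ?thesis unfolding F_def z_def by simp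
  qed
  define c where "c = (\<lambda>y::nat. card {s\<in>K. y mod Nn s = A s})"
  have cover: "exact_m_cover m k a n \<longleftrightarrow> (\<forall>y<N. c y = m)"
  proof -
    have keyf: "x \<in> res_class (a s) (n s) \<longleftrightarrow> nat (x mod int N) mod Nn s = A s" if s: "s \<in> K" for s x
    proof -
      have ns: "n s = int (Nn s)" "a s = int (A s)" using anK[OF s] unfolding Nn_def A_def by auto
      have d: "n s dvd int N" using Ndvd[OF s] ns by simp
      have "x \<in> res_class (a s) (n s) \<longleftrightarrow> x mod n s = a s" using anK[OF s] unfolding res_class_def by auto
      also have "x mod n s = (x mod int N) mod n s" using d by (simp add: mod_mod_cancel)
      also have "x mod int N = int (nat (x mod int N))" using Npos by simp
      also have "int (nat (x mod int N)) mod n s = int (nat (x mod int N) mod Nn s)" unfolding ns by (simp add: zmod_int)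
      finally show "x \<in> res_class (a s) (n s) \<longleftrightarrow> nat (x mod int N) mod Nn s = A s" unfolding ns by simp
    qed
    have key: "{s \<in> {1..k}. x \<in> res_class (a s) (n s)} = {s\<in>K. nat (x mod int N) mod Nn s = A s}" for x
      using keyf[of _ x] unfolding K_def by blast
    show ?thesis
    proof
      assume h: "exact_m_cover m k a n"
      show "\<forall>y<N. c y = m"
      proof (intro allI impI)
        fix y assume "y < N"
        hence "nat (int y mod int N) = y" by (simp add: zmod_int)
        thus "c y = m" using h key[of "int y"] unfolding exact_m_cover_def c_def by metis
      qed
    next
      assume h: "\<forall>y<N. c y = m"
      show "exact_m_cover m k a n" unfolding exact_m_cover_def
      proof
        fix x :: int
        have "nat (x mod int N) < N" using Npos by (simp add: nat_less_iff)
        thus "card {s \<in> {1..k}. x \<in> res_class (a s) (n s)} = m" using h key[of x] unfolding c_def by simp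
      qed
    qed
  qed
  define E where "E = (\<lambda>w::complex. \<Sum>x<N. (of_nat (c x) - of_nat m) * w^x)"
  have evalE: "E w = (1 - w^N) * F w" if "\<forall>s\<in>K. w^(Nn s) \<noteq> 1" "w \<noteq> 1" for w
    unfolding E_def F_def c_def using that Nnpos Alt Ndvd by (intro eval_lemma K) auto
  have Ez: "F z = 0 \<longleftrightarrow> E z = 0" using evalE[of z] zNn z1 zN by simp
  show ?thesis
  proof
    assume "exact_m_cover m k a n"
    hence "\<forall>y<N. c y = m" using cover by simp
    hence "E z = 0" unfolding E_def by simp
    thus "(\<Sum>s=1..k. cis (2 * pi * of_int (a s) / real p) / (1 - cis (2 * pi * of_int (n s) / real p)))
      = of_nat m / (1 - cis (2 * pi / real p))" using rhs Ez by simp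
  next
    assume "(\<Sum>s=1..k. cis (2 * pi * of_int (a s) / real p) / (1 - cis (2 * pi * of_int (n s) / real p)))
      = of_nat m / (1 - cis (2 * pi / real p))"
    hence Ez0: "E z = 0" using rhs Ez by simp
    define P :: "int poly" where "P = (\<Sum>x<N. monom (int (c x) - int m) x)"
    have cP: "coeff P i = (if i < N then int (c i) - int m else 0)" for i
      unfolding P_def by (simp add: coeff_sum coeff_monom)
    define Pc :: "complex poly" where "Pc = map_poly of_int P"
    have cPc: "coeff Pc i = (if i < N then of_nat (c i) - of_nat m else 0)" for i
      unfolding Pc_def by (simp add: coeff_map_poly cP)
    have dPc: "degree Pc < N"
    proof -
      have "degree Pc \<le> N - 1" by (intro degree_le) (auto simp: cPc)
      thus ?thesis using Npos by simp
    qed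
    have PcE: "poly Pc w = E w" for w
      unfolding poly_as_sum[OF dPc] E_def by (intro sum.cong refl) (simp add: cPc)
    have P0: "P = 0"
    proof (rule ccontr)
      assume "P \<noteq> 0"
      hence Pc0: "Pc \<noteq> 0" unfolding Pc_def by (metis map_poly_0 coeff_map_poly of_int_eq_0_iff poly_eqI coeff_0)
      define Z1 where "Z1 = (\<lambda>j. z^j) ` {1..<p}"
      define W where "W = {w::complex. w^N = 1 \<and> (\<forall>s\<in>K. w^(Nn s) \<noteq> 1)}"
      define T where "T = {w::complex. w^N = 1 \<and> (\<exists>s\<in>K. w^(Nn s) = 1)}"
      have roots: "Z1 \<union> W \<subseteq> {w. poly Pc w = 0}"
      proof
        fix w assume "w \<in> Z1 \<union> W"
        thus "w \<in> {w. poly Pc w = 0}"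
        proof
          assume "w \<in> Z1"
          then obtain j where j: "j \<in> {1..<p}" "w = z^j" unfolding Z1_def by blast
          have "w^p = 1" using j zpow1 by (simp add: power_mult[symmetric] mult.commute)
          moreover have "w \<noteq> 1" using j zpow1 by (auto dest: dvd_imp_le)
          moreover have "z^p = 1" using zpow1 by simp
          moreover have "poly (map_poly of_int P) z = 0" using Ez0 PcE unfolding Pc_def by simp
          ultimately show ?thesis using conj_roots[OF p _ z1] unfolding Pc_def by auto
        next
          assume w: "w \<in> W"
          obtain s0 where "s0 \<in> K" using k1 unfolding K_def by auto
          hence "w \<noteq> 1" using w unfolding W_def by auto
          hence "E w = 0" using evalE[of w] w unfolding W_def by auto
          thus ?thesis using PcE by simp
        qed
      qed
      have fin: "finite {w. poly Pc w = 0}" using Pc0 by (rule poly_roots_finite)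
      have cardR: "card {w. poly Pc w = 0} < N" using card_poly_roots_bound[OF Pc0] dPc by simp
      have injZ: "inj_on (\<lambda>j. z^j) {1..<p}"
      proof -
        have "inj_on (\<lambda>j. cis (2 * pi * real j / real p)) {..<p}"
          using bij_betw_roots_unity[of p] p2 unfolding bij_betw_def by simp
        hence "inj_on (\<lambda>j. cis (2 * pi * real j / real p)) {1..<p}" by (rule inj_on_subset) auto
        thus ?thesis unfolding z_def zeta_pow .
      qed
      have cZ1: "card Z1 = p - 1" unfolding Z1_def using card_image[OF injZ] by simp
      have disj: "Z1 \<inter> W = {}"
      proof (rule ccontr)
        assume "Z1 \<inter> W \<noteq> {}"
        then obtain j where j: "j \<in> {1..<p}" "(z^j)^N = 1" unfolding Z1_def W_def by (auto simp del: power_mult) (meson atLeastLessThan_iff le_simps(3))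
        hence "p dvd j * N" using zpow1 by (simp add: power_mult[symmetric])
        hence "p dvd j \<or> p dvd N" using p by (simp add: prime_dvd_mult_iff)
        thus False using pN j by (auto dest: dvd_imp_le)
      qed
      have finU: "finite {w::complex. w^N = 1}" using Npos by (intro finite_roots_unity) simp
      have TU: "T \<subseteq> {w. w^N = 1}" unfolding T_def by auto
      have WU: "W = {w. w^N = 1} - T" unfolding W_def T_def by auto
      have cW: "card W = N - card T" unfolding WU using card_Diff_subset[OF finite_subset[OF TU finU] TU]
        card_roots_unity_eq[OF Npos] by simp
      have TS: "T \<subseteq> (\<lambda>\<theta>. cis (2 * pi * of_rat \<theta>)) ` S_set k n"
      proof
        fix w assume "w \<in> T"
        then obtain s where s: "s \<in> K" "w^(Nn s) = 1" unfolding T_def by auto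
        then obtain r where r: "r < Nn s" "w = cis (2 * pi * real r / real (Nn s))"
          using bij_betw_roots_unity[OF Nnpos[OF s(1)]] unfolding bij_betw_def by (metis (mono_tags, lifting) imageE lessThan_iff mem_Collect_eq)
        have ns: "n s = int (Nn s)" using anK[OF s(1)] unfolding Nn_def by auto
        define \<theta> where "\<theta> = (of_int (int r) / of_int (n s) :: rat)"
        have "\<theta> \<in> S_set k n" unfolding S_set_def \<theta>_def using s r ns unfolding K_def
          by (intro CollectI exI[of _ "int r"] exI[of _ s]) auto
        moreover have "of_rat \<theta> = real r / real (Nn s)" unfolding \<theta>_def ns by (simp add: of_rat_divide)
        ultimately show "w \<in> (\<lambda>\<theta>. cis (2 * pi * of_rat \<theta>)) ` S_set k n" using r by (auto intro!: image_eqI[of _ _ \<theta>])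
      qed
      have cT: "card T \<le> card (S_set k n)"
        using card_mono[OF finite_imageI[OF S_fin] TS] card_image_le[OF S_fin, of "\<lambda>\<theta>. cis (2 * pi * of_rat \<theta>)" k n]
        by linarith
      have cU: "card (Z1 \<union> W) = card Z1 + card W"
        using disj by (intro card_Un_disjoint) (auto simp: Z1_def W_def intro: finite_subset[OF _ finU])
      have cTN: "card T \<le> N" using card_mono[OF finU TU] card_roots_unity_eq[OF Npos] by simp
      have "N \<le> card (Z1 \<union> W)" unfolding cU cZ1 cW using cT pS cTN by linarith
      also have "card (Z1 \<union> W) \<le> card {w. poly Pc w = 0}" using card_mono[OF fin roots] .
      finally have "N \<le> card {w. poly Pc w = 0}" .
      thus False using cardR by simp
    qed
    have "\<forall>y<N. c y = m"
    proof (intro allI impI)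
      fix y assume "y < N"
      thus "c y = m" using cP[of y] P0 by simp
    qed
    thus "exact_m_cover m k a n" using cover by simp
  qed
qed

theorem corollary1p1:
  fixes m k :: nat and a n :: "nat \<Rightarrow> int" and p :: nat
  assumes "m > 0"
    and "\<forall>s\<in>{1..k}. n s > 0 \<and> 0 \<le> a s \<and> a s < n s"
    and "prime p"
    and "p > card (S_set k n)"
  shows "exact_m_cover m k a n \<longleftrightarrow>
    (\<Sum>s=1..k. cis (2 * pi * of_int (a s) / real p) / (1 - cis (2 * pi * of_int (n s) / real p)))
      = of_nat m / (1 - cis (2 * pi / real p))"
proof (cases "k = 0")
  case True
  have p2: "p \<ge> 2" using assms(3) prime_ge_2_nat by blast
  have z1: "cis (2 * pi / real p) \<noteq> 1" using zeta_pow_eq_1[of p 1] p2 by simp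
  have l: "\<not> exact_m_cover m k a n" unfolding exact_m_cover_def using True assms(1) by simp
  have r: "of_nat m / (1 - cis (2 * pi / real p)) \<noteq> 0" using z1 assms(1) by simp
  show ?thesis using l r True by simp
next
  case False
  thus ?thesis using main_k_pos[OF assms(1) _ assms(2-4)] by simp
qed

end
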